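(* Let $R$ be an integral domain and $\delta,\gamma,p,q\in R$. Let $a=\mathcal{W}(\delta,\gamma,p,q)$ and $u=\mathcal{W}(0,1,p,q)$. Then for every integer $k\ge1$, $$(a_{kn})_{n\ge0}=L^{(u_k,\,-qu_{k-1})}(a),$$ i.e. $a_{kn}=\sum_{i=0}^n\binom{n}{i}u_k^i(-qu_{k-1})^{n-i}a_i$ for all $n\ge0$.
   Context: $\mathcal{W}(\delta,\gamma,p,q)$ denotes the sequence $(a_n)_{n\ge0}$ with $a_0=\delta$, $a_1=\gamma$, $a_n=pa_{n-1}-qa_{n-2}$ for $n\ge2$. For $h,y\in R$, $L^{(h,y)}(a)$ is the sequence $b$ with $b_n=\sum_{i=0}^n\binom{n}{i}h^iy^{n-i}a_i$, with the convention $0^0=1$. *)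

theory Defs
  imports Main
begin

fun W :: "'a::comm_ring_1 \<Rightarrow> 'a \<Rightarrow> 'a \<Rightarrow> 'a \<Rightarrow> nat \<Rightarrow> 'a" where
  "W \<delta> \<gamma> p q 0 = \<delta>"
| "W \<delta> \<gamma> p q (Suc 0) = \<gamma>"
| "W \<delta> \<gamma> p q (Suc (Suc n)) = p * W \<delta> \<gamma> p q (Suc n) - q * W \<delta> \<gamma> p q n"

text \<open>Binomial transform L^(h,y)(a); note x^0 = 1 in Isabelle, so 0^0 = 1.\<close>
definition L :: "'a::comm_ring_1 \<Rightarrow> 'a \<Rightarrow> (nat \<Rightarrow> 'a) \<Rightarrow> nat \<Rightarrow> 'a" where
  "L h y a n = (\<Sum>i = 0..n. of_nat (n choose i) * h ^ i * y ^ (n - i) * a i)"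

end

theory Submission
  imports Defs
begin

lemma shift_id:
  fixes p q :: "'a::comm_ring_1"
  shows "W d g p q (m + Suc k) = W 0 1 p q (Suc k) * W d g p q (Suc m) - q * W 0 1 p q k * W d g p q m
       \<and> W d g p q (m + Suc (Suc k)) = W 0 1 p q (Suc (Suc k)) * W d g p q (Suc m) - q * W 0 1 p q (Suc k) * W d g p q m"
proof (induction k)
  case 0
  then show ?case by (simp add: algebra_simps)
next
  case (Suc k)
  then have h1: "W d g p q (m + Suc k) = W 0 1 p q (Suc k) * W d g p q (Suc m) - q * W 0 1 p q k * W d g p q m"
    and h2: "W d g p q (m + Suc (Suc k)) = W 0 1 p q (Suc (Suc k)) * W d g p q (Suc m) - q * W 0 1 p q (Suc k) * W d g p q m"
    by auto
  have "W d g p q (m + Suc (Suc (Suc k))) = p * W d g p q (m + Suc (Suc k)) - q * W d g p q (m + Suc k)"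
    by simp
  also have "\<dots> = W 0 1 p q (Suc (Suc (Suc k))) * W d g p q (Suc m) - q * W 0 1 p q (Suc (Suc k)) * W d g p q m"
    by (simp only: h1 h2 W.simps) (simp add: algebra_simps)
  finally show ?case using h2 by simp
qed

definition T :: "'a::comm_ring_1 \<Rightarrow> 'a \<Rightarrow> (nat \<Rightarrow> 'a) \<Rightarrow> nat \<Rightarrow> nat \<Rightarrow> 'a" where
  "T h y a n m = (\<Sum>i\<le>n. of_nat (n choose i) * h ^ i * y ^ (n - i) * a (m + i))"

lemma T_Suc: "T h y a (Suc n) m = h * T h y a n (Suc m) + y * T h y a n m"
proof -
  have "T h y a (Suc n) m = y ^ Suc n * a m +
     (\<Sum>i\<le>n. of_nat (Suc n choose Suc i) * h ^ Suc i * y ^ (n - i) * a (m + Suc i))"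
    unfolding T_def by (subst sum.atMost_Suc_shift) simp
  also have "\<dots> = y ^ Suc n * a m +
     (\<Sum>i\<le>n. of_nat (n choose i) * h ^ Suc i * y ^ (n - i) * a (m + Suc i)) +
     (\<Sum>i\<le>n. of_nat (n choose Suc i) * h ^ Suc i * y ^ (n - i) * a (m + Suc i))"
    by (simp add: sum.distrib algebra_simps)
  also have "(\<Sum>i\<le>n. of_nat (n choose i) * h ^ Suc i * y ^ (n - i) * a (m + Suc i)) = h * T h y a n (Suc m)"
    unfolding T_def by (simp add: sum_distrib_left algebra_simps)
  finally have A: "T h y a (Suc n) m = y ^ Suc n * a m + h * T h y a n (Suc m) +
     (\<Sum>i\<le>n. of_nat (n choose Suc i) * h ^ Suc i * y ^ (n - i) * a (m + Suc i))" .
  have "y ^ Suc n * a m + (\<Sum>i\<le>n. of_nat (n choose Suc i) * h ^ Suc i * y ^ (n - i) * a (m + Suc i))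
      = (\<Sum>i\<le>Suc n. of_nat (n choose i) * h ^ i * y ^ (Suc n - i) * a (m + i))"
    by (subst sum.atMost_Suc_shift) simp
  also have "\<dots> = (\<Sum>i\<le>n. of_nat (n choose i) * h ^ i * y ^ (Suc n - i) * a (m + i))"
    by (simp add: binomial_eq_0)
  also have "\<dots> = y * T h y a n m"
    unfolding T_def sum_distrib_left
    by (rule sum.cong) (auto simp: Suc_diff_le algebra_simps)
  finally show ?thesis using A by (simp add: algebra_simps)
qed

theorem theorem14:
  fixes \<delta> \<gamma> p q :: "'a::idom" and k :: nat
  assumes "k \<ge> 1"
  shows "(\<lambda>n. W \<delta> \<gamma> p q (k * n)) =
         L (W 0 1 p q k) (- q * W 0 1 p q (k - 1)) (W \<delta> \<gamma> p q)"
proof -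
  obtain k' where k: "k = Suc k'" using assms by (cases k) auto
  define h where "h = W 0 1 p q k"
  define y where "y = - q * W 0 1 p q (k - 1)"
  have main: "\<forall>m. W \<delta> \<gamma> p q (m + k * n) = T h y (W \<delta> \<gamma> p q) n m" for n
  proof (induction n)
    case 0
    then show ?case by (simp add: T_def)
  next
    case (Suc n)
    show ?case
    proof
      fix m
      have "W \<delta> \<gamma> p q (m + k * Suc n) = W \<delta> \<gamma> p q ((m + k * n) + Suc k')"
        by (simp add: k algebra_simps)
      also have "\<dots> = h * W \<delta> \<gamma> p q (Suc m + k * n) + y * W \<delta> \<gamma> p q (m + k * n)"
        using shift_id[of \<delta> \<gamma> p q "m + k * n" k'] by (simp add: h_def y_def k algebra_simps)
      also have "\<dots> = T h y (W \<delta> \<gamma> p q) (Suc n) m"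
        using Suc.IH[rule_format, of m] Suc.IH[rule_format, of "Suc m"] by (simp add: T_Suc)
      finally show "W \<delta> \<gamma> p q (m + k * Suc n) = T h y (W \<delta> \<gamma> p q) (Suc n) m" .
    qed
  qed
  show ?thesis
  proof
    fix n
    show "W \<delta> \<gamma> p q (k * n) = L (W 0 1 p q k) (- q * W 0 1 p q (k - 1)) (W \<delta> \<gamma> p q) n"
      using main[of n, rule_format, of 0]
      by (simp add: L_def T_def h_def y_def atLeast0AtMost)
  qed
qed

end
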